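(* Let $X$ be a reflexive Banach space. If $X$ contains a $\mathfrak{D}$-point, then both $X$ and $X^*$ contain a sequential super $\Delta$-point; in particular neither $X$ nor $X^*$ has the Kadets–Klee property.
   Context: For $x\in S_X$ let $D(x)=\{x^*\in S_{X^*}:x^*(x)=1\}$ and $S(x^*,\varepsilon)=\{y\in B_X:x^*(y)>1-\varepsilon\}$. A point $x\in S_X$ is a $\mathfrak{D}$-point if $\sup_{y\in S(x^*,\varepsilon)}\|x-y\|=2$ for every $x^*\in D(x)$ and $\varepsilon>0$. A point $x\in S_X$ is a sequential super $\Delta$-point if there is a sequence $(x_n)$ in $S_X$ converging weakly to $x$ with $\|x-x_n\|\to2$. A Banach space $Z$ has the Kadets–Klee property if for every sequence $(z_n)$ in $S_Z$ and every $z\in S_Z$, $z_n\to z$ weakly if and only if $\|z-z_n\|\to0$. *)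

theory Defs
  imports "HOL-Analysis.Analysis"
begin

definition unit_sphere :: "'a::real_normed_vector set" where
  "unit_sphere = {x. norm x = 1}"

definition unit_ball :: "'a::real_normed_vector set" where
  "unit_ball = {x. norm x \<le> 1}"

definition reflexive_space :: "'a::banach itself \<Rightarrow> bool" where
  "reflexive_space _ \<longleftrightarrow>
     (\<forall>\<phi> :: ('a \<Rightarrow>\<^sub>L real) \<Rightarrow>\<^sub>L real. \<exists>x::'a. \<forall>f. blinfun_apply \<phi> f = blinfun_apply f x)"

definition weakly_convergent_to :: "(nat \<Rightarrow> 'a::real_normed_vector) \<Rightarrow> 'a \<Rightarrow> bool" where
  "weakly_convergent_to xs x \<longleftrightarrow>
     (\<forall>f :: 'a \<Rightarrow>\<^sub>L real. (\<lambda>n. blinfun_apply f (xs n)) \<longlonglongrightarrow> blinfun_apply f x)"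

definition norming_functionals :: "'a::real_normed_vector \<Rightarrow> ('a \<Rightarrow>\<^sub>L real) set" where
  "norming_functionals x = {f. norm f = 1 \<and> blinfun_apply f x = 1}"

definition slice :: "('a::real_normed_vector \<Rightarrow>\<^sub>L real) \<Rightarrow> real \<Rightarrow> 'a set" where
  "slice f \<epsilon> = {y \<in> unit_ball. blinfun_apply f y > 1 - \<epsilon>}"

definition is_D_point :: "'a::real_normed_vector \<Rightarrow> bool" where
  "is_D_point x \<longleftrightarrow> x \<in> unit_sphere \<and>
     (\<forall>f \<in> norming_functionals x. \<forall>\<epsilon>>0. (SUP y\<in>slice f \<epsilon>. norm (x - y)) = 2)"

definition is_seq_super_Delta_point :: "'a::real_normed_vector \<Rightarrow> bool" where
  "is_seq_super_Delta_point x \<longleftrightarrow> x \<in> unit_sphere \<and>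
     (\<exists>xs. (\<forall>n. xs n \<in> unit_sphere) \<and> weakly_convergent_to xs x \<and>
           (\<lambda>n. norm (x - xs n)) \<longlonglongrightarrow> 2)"

definition kadets_klee :: "'a::real_normed_vector itself \<Rightarrow> bool" where
  "kadets_klee _ \<longleftrightarrow>
     (\<forall>(zs :: nat \<Rightarrow> 'a) z. (\<forall>n. zs n \<in> unit_sphere) \<longrightarrow> z \<in> unit_sphere \<longrightarrow>
        (weakly_convergent_to zs z \<longleftrightarrow> (\<lambda>n. norm (z - zs n)) \<longlonglongrightarrow> 0))"

end

theory Submission
  imports Defs "HOL-Library.Diagonal_Subsequence"
begin


definition hbA :: "real \<Rightarrow> ('a::real_normed_vector \<times> real) set \<Rightarrow> ('a \<times> real) set set" where
  "hbA C M0 = {G. (\<forall>x a b. (x,a)\<in>G \<longrightarrow> (x,b)\<in>G \<longrightarrow> a=b) \<and>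
     (\<forall>x a y b. (x,a)\<in>G \<longrightarrow> (y,b)\<in>G \<longrightarrow> (x+y,a+b)\<in>G) \<and>
     (\<forall>x a r. (x,a)\<in>G \<longrightarrow> (r *\<^sub>R x, r*a)\<in>G) \<and>
     (\<forall>x a. (x,a)\<in>G \<longrightarrow> a \<le> C * norm x) \<and> (0,0) \<in> G \<and> M0 \<subseteq> G}"

lemma hb_extend:
  fixes G :: "('a::real_normed_vector \<times> real) set"
  assumes G: "G \<in> hbA C M0" and C: "0 \<le> C" and x0: "\<forall>a. (x0,a) \<notin> G"
  shows "\<exists>G'\<in>hbA C M0. G \<subseteq> G' \<and> G' \<noteq> G"
proof -
  have gfun: "\<And>x a b. (x,a)\<in>G \<Longrightarrow> (x,b)\<in>G \<Longrightarrow> a=b"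
   and add: "\<And>x a y b. (x,a)\<in>G \<Longrightarrow> (y,b)\<in>G \<Longrightarrow> (x+y,a+b)\<in>G"
   and sc: "\<And>x a r. (x,a)\<in>G \<Longrightarrow> (r *\<^sub>R x, r*a)\<in>G"
   and bd: "\<And>x a. (x,a)\<in>G \<Longrightarrow> a \<le> C * norm x"
   and z: "(0,0) \<in> G" and M0: "M0 \<subseteq> G"
    using G unfolding hbA_def by blast+
  define L where "L = {b - C * norm (y - x0) | y b. (y,b)\<in>G}"
  define c where "c = Sup L"
  have LR: "b - C * norm (y - x0) \<le> C * norm (z + x0) - e" if "(y,b)\<in>G" "(z,e)\<in>G" for y b z e
  proof -
    have "b + e \<le> C * norm (y + z)" using bd[OF add[OF that]] .
    also have "norm (y + z) \<le> norm (y - x0) + norm (z + x0)"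
      using norm_triangle_ineq[of "y - x0" "z + x0"] by simp
    hence "C * norm (y + z) \<le> C * norm (y - x0) + C * norm (z + x0)"
      using C by (metis distrib_left mult_left_mono)
    finally show ?thesis by simp
  qed
  have Lne: "L \<noteq> {}" unfolding L_def using z by blast
  have Lbd: "bdd_above L" unfolding L_def bdd_above_def using LR z by blast
  have cL: "b - C * norm (y - x0) \<le> c" if "(y,b)\<in>G" for y b
    unfolding c_def using that Lbd by (intro cSup_upper) (auto simp: L_def)
  have cR: "c \<le> C * norm (z + x0) - e" if "(z,e)\<in>G" for z e
    unfolding c_def using that Lne LR by (intro cSup_least) (auto simp: L_def)
  define G' where "G' = {(y + a *\<^sub>R x0, b + a * c) | y b a. (y,b) \<in> G}"
  have inG': "(y + a *\<^sub>R x0, b + a * c) \<in> G'" if "(y,b)\<in>G" for y b a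
    using that unfolding G'_def by blast
  have G'gfun: "b + a * c = b' + a' * c"
    if "(y,b)\<in>G" "(y',b')\<in>G" "y + a *\<^sub>R x0 = y' + a' *\<^sub>R x0" for y b a y' b' a'
  proof (cases "a = a'")
    case True
    then have "y = y'" using that(3) by simp
    then show ?thesis using gfun that True by blast
  next
    case False
    have "(y' + (-1) *\<^sub>R y, b' + (-1) * b) \<in> G" using add[OF that(2) sc[OF that(1)]] .
    then have "((1/(a - a')) *\<^sub>R (y' + (-1) *\<^sub>R y), (1/(a-a')) * (b' + (-1) * b)) \<in> G" by (rule sc)
    moreover have "(1/(a - a')) *\<^sub>R (y' + (-1) *\<^sub>R y) = x0"
    proof -
      have "y' - y = (a - a') *\<^sub>R x0" using that(3) by (simp add: algebra_simps)
      then show ?thesis using False by simp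
    qed
    ultimately show ?thesis using x0 by auto
  qed
  have "G' \<in> hbA C M0"
    unfolding hbA_def
  proof (intro CollectI conjI allI impI)
    fix x a b assume "(x,a)\<in>G'" "(x,b)\<in>G'" then show "a = b"
      unfolding G'_def using G'gfun by blast
  next
    fix x a y b assume "(x,a)\<in>G'" "(y,b)\<in>G'"
    then obtain y1 b1 a1 y2 b2 a2 where "(y1,b1)\<in>G" "x = y1 + a1 *\<^sub>R x0" "a = b1 + a1 * c"
       "(y2,b2)\<in>G" "y = y2 + a2 *\<^sub>R x0" "b = b2 + a2 * c" unfolding G'_def by blast
    then show "(x+y, a+b) \<in> G'"
      using inG'[OF add[of y1 b1 y2 b2], of "a1 + a2"] by (simp add: algebra_simps)
  next
    fix x a r assume "(x,a)\<in>G'"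
    then obtain y1 b1 a1 where "(y1,b1)\<in>G" "x = y1 + a1 *\<^sub>R x0" "a = b1 + a1 * c"
      unfolding G'_def by blast
    then show "(r *\<^sub>R x, r * a) \<in> G'"
      using inG'[OF sc[of y1 b1 r], of "r * a1"] by (simp add: algebra_simps)
  next
    fix x a assume "(x,a)\<in>G'"
    then obtain y b t where yb: "(y,b)\<in>G" and xe: "x = y + t *\<^sub>R x0" and ae: "a = b + t * c"
      unfolding G'_def by blast
    show "a \<le> C * norm x"
    proof (cases "t = 0")
      case True then show ?thesis using bd yb xe ae by simp
    next
      case False
      have s: "((1/t) *\<^sub>R y, (1/t) * b) \<in> G" using sc[OF yb] .
      show ?thesis
      proof (cases "t > 0")
        case True
        have "c \<le> C * norm ((1/t) *\<^sub>R y + x0) - (1/t) * b" using cR[OF s] .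
        hence "t * c \<le> t * (C * norm ((1/t) *\<^sub>R y + x0)) - b"
          using True by (simp add: field_simps)
        moreover have "t * norm ((1/t) *\<^sub>R y + x0) = norm (y + t *\<^sub>R x0)"
        proof -
          have "y + t *\<^sub>R x0 = t *\<^sub>R ((1/t) *\<^sub>R y + x0)" using True by (simp add: algebra_simps)
          then show ?thesis using True by simp
        qed
        ultimately show ?thesis using xe ae by (simp add: algebra_simps)
      next
        case False
        hence tn: "t < 0" using \<open>t \<noteq> 0\<close> by simp
        define u where "u = - t"
        have u: "u > 0" using tn u_def by simp
        have s2: "((1/u) *\<^sub>R y, (1/u) * b) \<in> G" using sc[OF yb] .
        have "(1/u) * b - C * norm ((1/u) *\<^sub>R y - x0) \<le> c" using cL[OF s2] .
        hence "b - u * (C * norm ((1/u) *\<^sub>R y - x0)) \<le> u * c"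
          using u by (simp add: field_simps)
        moreover have "u * norm ((1/u) *\<^sub>R y - x0) = norm (y + t *\<^sub>R x0)"
        proof -
          have "y + t *\<^sub>R x0 = u *\<^sub>R ((1/u) *\<^sub>R y - x0)" using u u_def by (simp add: algebra_simps)
          then show ?thesis using u by simp
        qed
        ultimately have "b - C * norm (y + t *\<^sub>R x0) \<le> u * c"
          by (metis mult.left_commute)
        then show ?thesis using xe ae u_def by (simp add: algebra_simps)
      qed
    qed
  next
    show "(0,0) \<in> G'" using inG'[OF z, of 0] by simp
  next
    have "G \<subseteq> G'" using inG'[of _ _ 0] by auto
    then show "M0 \<subseteq> G'" using M0 by blast
  qed
  moreover have "G \<subseteq> G'" using inG'[of _ _ 0] by auto
  moreover have "(x0, c) \<in> G'" using inG'[OF z, of 1] by simp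
  ultimately show ?thesis using x0 by blast
qed

theorem hahn_banach:
  fixes M0 :: "('a::real_normed_vector \<times> real) set"
  assumes M0: "M0 \<in> hbA C M0" and C: "0 \<le> C"
  shows "\<exists>F::'a \<Rightarrow>\<^sub>L real. (\<forall>(x,a)\<in>M0. blinfun_apply F x = a) \<and> norm F \<le> C"
proof -
  have "\<forall>Ch\<in>chains (hbA C M0). \<exists>U\<in>hbA C M0. \<forall>X\<in>Ch. X \<subseteq> U"
  proof
    fix Ch assume Ch: "Ch \<in> chains (hbA C M0)"
    show "\<exists>U\<in>hbA C M0. \<forall>X\<in>Ch. X \<subseteq> U"
    proof (cases "Ch = {}")
      case True then show ?thesis using M0 by blast
    next
      case False
      have sub: "Ch \<subseteq> hbA C M0" using chainsD2[OF Ch] .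
      have two: "\<exists>G\<in>Ch. p \<in> G \<and> q \<in> G" if "p \<in> \<Union>Ch" "q \<in> \<Union>Ch" for p q
        using that chainsD[OF Ch] by blast
      have "\<Union>Ch \<in> hbA C M0" unfolding hbA_def
      proof (intro CollectI conjI allI impI)
        fix x a b assume "(x,a)\<in>\<Union>Ch" "(x,b)\<in>\<Union>Ch"
        then obtain G where "G\<in>Ch" "(x,a)\<in>G" "(x,b)\<in>G" using two by blast
        then show "a = b" using sub unfolding hbA_def by blast
      next
        fix x a y b assume "(x,a)\<in>\<Union>Ch" "(y,b)\<in>\<Union>Ch"
        then obtain G where "G\<in>Ch" "(x,a)\<in>G" "(y,b)\<in>G" using two by blast
        then show "(x+y,a+b)\<in>\<Union>Ch" using sub unfolding hbA_def by blast
      next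
        fix x a r assume "(x,a)\<in>\<Union>Ch"
        then obtain G where "G\<in>Ch" "(x,a)\<in>G" by blast
        then show "(r *\<^sub>R x, r*a)\<in>\<Union>Ch" using sub unfolding hbA_def by blast
      next
        fix x a assume "(x,a)\<in>\<Union>Ch"
        then obtain G where "G\<in>Ch" "(x,a)\<in>G" by blast
        then show "a \<le> C * norm x" using sub unfolding hbA_def by blast
      next
        obtain G where "G \<in> Ch" using False by blast
        then show "(0,0) \<in> \<Union>Ch" using sub unfolding hbA_def by blast
      next
        obtain G where "G \<in> Ch" using False by blast
        then show "M0 \<subseteq> \<Union>Ch" using sub unfolding hbA_def by blast
      qed
      then show ?thesis by blast
    qed
  qed
  from Zorn_Lemma2[OF this] obtain G where G: "G \<in> hbA C M0"
    and max: "\<And>X. X \<in> hbA C M0 \<Longrightarrow> G \<subseteq> X \<Longrightarrow> X = G" by blast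
  have gfun: "\<And>x a b. (x,a)\<in>G \<Longrightarrow> (x,b)\<in>G \<Longrightarrow> a=b"
   and add: "\<And>x a y b. (x,a)\<in>G \<Longrightarrow> (y,b)\<in>G \<Longrightarrow> (x+y,a+b)\<in>G"
   and sc: "\<And>x a r. (x,a)\<in>G \<Longrightarrow> (r *\<^sub>R x, r*a)\<in>G"
   and bd: "\<And>x a. (x,a)\<in>G \<Longrightarrow> a \<le> C * norm x"
   and M0G: "M0 \<subseteq> G"
    using G unfolding hbA_def by blast+
  have tot: "\<exists>a. (x,a) \<in> G" for x
    using hb_extend[OF G C, of x] max by blast
  define f where "f x = (THE a. (x,a) \<in> G)" for x
  have fG: "(x, f x) \<in> G" for x
    unfolding f_def using tot[of x] gfun by (metis theI)
  have fv: "(x,a) \<in> G \<Longrightarrow> f x = a" for x a using fG gfun by blast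
  have lin1: "f (x + y) = f x + f y" for x y using fv[OF add[OF fG fG]] .
  have lin2: "f (r *\<^sub>R x) = r *\<^sub>R f x" for r x using fv[OF sc[OF fG]] by simp
  have nb: "norm (f x) \<le> norm x * C" for x
  proof -
    have "f x \<le> C * norm x" using bd[OF fG] .
    moreover have "- f x \<le> C * norm x" using bd[OF sc[OF fG[of x], of "-1"]] by simp
    ultimately show ?thesis by (simp add: abs_le_iff mult.commute)
  qed
  have bl: "bounded_linear f" by (rule bounded_linear_intro[OF lin1 lin2 nb])
  show ?thesis
  proof (intro exI conjI)
    show "\<forall>(x,a)\<in>M0. blinfun_apply (Blinfun f) x = a"
      using bounded_linear_Blinfun_apply[OF bl] fv M0G by auto
    show "norm (Blinfun f) \<le> C"
      using norm_blinfun_bound[OF C, of "Blinfun f"] nb bounded_linear_Blinfun_apply[OF bl]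
      by (simp add: mult.commute)
  qed
qed



lemma separation:
  fixes Y :: "'a::real_normed_vector set"
  assumes Y: "subspace Y" "closed Y" and z: "z \<notin> Y"
  shows "\<exists>F::'a \<Rightarrow>\<^sub>L real. (\<forall>y\<in>Y. blinfun_apply F y = 0) \<and> blinfun_apply F z \<noteq> 0
     \<and> norm F \<le> 1 \<and> blinfun_apply F z = infdist z Y"
proof -
  have Y0: "0 \<in> Y" using Y(1) by (simp add: subspace_0)
  define d where "d = infdist z Y"
  have d: "d > 0" unfolding d_def using infdist_pos_not_in_closed[OF Y(2) _ z] Y0 by blast
  have Yadd: "a \<in> Y \<Longrightarrow> b \<in> Y \<Longrightarrow> a + b \<in> Y" for a b using Y(1) by (simp add: subspace_add)
  have Ysc: "a \<in> Y \<Longrightarrow> r *\<^sub>R a \<in> Y" for a r using Y(1) by (simp add: subspace_scale)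
  have Yneg: "a \<in> Y \<Longrightarrow> - a \<in> Y" for a using Ysc[of a "-1"] by simp
  have uniq: "a = b" if "y \<in> Y" "y' \<in> Y" "y + a *\<^sub>R z = y' + b *\<^sub>R z" for y y' a b
  proof (rule ccontr)
    assume ab: "a \<noteq> b"
    have "(a - b) *\<^sub>R z = y' - y" using that(3) by (simp add: algebra_simps)
    moreover have "z = (1/(a-b)) *\<^sub>R ((a-b) *\<^sub>R z)" using ab by simp
    ultimately have "z = (1/(a-b)) *\<^sub>R (y' + - y)" by simp
    moreover have "(1/(a-b)) *\<^sub>R (y' + - y) \<in> Y" using that Ysc Yadd Yneg by blast
    ultimately show False using z by simp
  qed
  define M0 where "M0 = {(y + a *\<^sub>R z, a * d) | y a. y \<in> Y}"
  have "M0 \<in> hbA 1 M0" unfolding hbA_def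
  proof (intro CollectI conjI allI impI)
    fix w p q assume "(w,p) \<in> M0" "(w,q) \<in> M0"
    then obtain y a y' b where "y\<in>Y" "y'\<in>Y" "w = y + a *\<^sub>R z" "p = a * d" "w = y' + b *\<^sub>R z" "q = b * d" unfolding M0_def by blast
    then show "p = q" using uniq[of y y' a b] by simp
  next
    fix w p w' q assume "(w,p) \<in> M0" "(w',q) \<in> M0"
    then obtain y a y' b where "y\<in>Y" "y'\<in>Y" "w = y + a *\<^sub>R z" "p = a * d" "w' = y' + b *\<^sub>R z" "q = b * d" unfolding M0_def by blast
    then show "(w+w',p+q) \<in> M0" unfolding M0_def
      by (intro CollectI exI[of _ "y+y'"] exI[of _ "a+b"]) (auto simp: algebra_simps Yadd)
  next
    fix w p r assume "(w,p) \<in> M0"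
    then obtain y a where "y\<in>Y" "w = y + a *\<^sub>R z" "p = a * d" unfolding M0_def by blast
    then show "(r *\<^sub>R w, r*p) \<in> M0" unfolding M0_def
      by (intro CollectI exI[of _ "r *\<^sub>R y"] exI[of _ "r*a"]) (auto simp: algebra_simps Ysc)
  next
    fix w p assume "(w,p) \<in> M0"
    then obtain y a where y: "y\<in>Y" and w: "w = y + a *\<^sub>R z" and p: "p = a * d" unfolding M0_def by blast
    show "p \<le> 1 * norm w"
    proof (cases "a = 0")
      case True then show ?thesis using p by simp
    next
      case False
      have "- ((1/a) *\<^sub>R y) \<in> Y" using y Ysc Yneg by blast
      hence "d \<le> dist z (- ((1/a) *\<^sub>R y))" unfolding d_def by (rule infdist_le)
      also have "dist z (- ((1/a) *\<^sub>R y)) = norm (z + (1/a) *\<^sub>R y)" by (simp add: dist_norm)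
      finally have "\<bar>a\<bar> * d \<le> \<bar>a\<bar> * norm (z + (1/a) *\<^sub>R y)" by (simp add: mult_left_mono)
      also have "\<bar>a\<bar> * norm (z + (1/a) *\<^sub>R y) = norm (a *\<^sub>R (z + (1/a) *\<^sub>R y))" by simp
      also have "a *\<^sub>R (z + (1/a) *\<^sub>R y) = w" using False w by (simp add: algebra_simps)
      finally show ?thesis using p d by (smt (verit) mult_right_mono)
    qed
  next
    show "(0,0) \<in> M0" unfolding M0_def
      by (intro CollectI exI[of _ 0] exI[of _ "0::real"]) (simp add: Y0)
  qed simp
  from hahn_banach[OF this] obtain F :: "'a \<Rightarrow>\<^sub>L real" where
    F: "\<forall>(w,p)\<in>M0. blinfun_apply F w = p" and nF: "norm F \<le> 1" by auto
  have "blinfun_apply F y = 0" if "y \<in> Y" for y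
  proof -
    have "(y + 0 *\<^sub>R z, 0 * d) \<in> M0" unfolding M0_def using that by blast
    then show ?thesis using F by auto
  qed
  moreover have "(0 + 1 *\<^sub>R z, 1 * d) \<in> M0" unfolding M0_def using Y0 by blast
  then have "blinfun_apply F z = d" using F by auto
  ultimately show ?thesis using d nF unfolding d_def by (intro exI[of _ F]) simp
qed

lemma norming:
  fixes x :: "'a::real_normed_vector"
  shows "\<exists>F::'a \<Rightarrow>\<^sub>L real. norm F \<le> 1 \<and> blinfun_apply F x = norm x"
proof (cases "x = 0")
  case True then show ?thesis by (intro exI[of _ 0]) simp
next
  case False
  have "subspace {0::'a}" "closed {0::'a}" by (auto simp: subspace_def)
  from separation[OF this, of x] False obtain F :: "'a \<Rightarrow>\<^sub>L real" where
    "norm F \<le> 1" "blinfun_apply F x = infdist x {0}" by blast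
  then show ?thesis by (intro exI[of _ F]) (simp add: infdist_singleton dist_norm)
qed

lemma weak_norm_le:
  fixes vs :: "nat \<Rightarrow> 'a::real_normed_vector"
  assumes w: "weakly_convergent_to vs v" and b: "\<And>n. norm (vs n) \<le> B"
  shows "norm v \<le> B"
proof -
  obtain F :: "'a \<Rightarrow>\<^sub>L real" where F: "norm F \<le> 1" "blinfun_apply F v = norm v"
    using norming by blast
  have t: "(\<lambda>n. blinfun_apply F (vs n)) \<longlonglongrightarrow> norm v"
    using w F(2) unfolding weakly_convergent_to_def by (elim allE[of _ F]) simp
  have "blinfun_apply F (vs n) \<le> B" for n
  proof -
    have "blinfun_apply F (vs n) \<le> norm F * norm (vs n)" using norm_blinfun[of F "vs n"] by simp
    also have "\<dots> \<le> 1 * B" using F(1) b[of n] by (intro mult_mono) auto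
    finally show ?thesis by simp
  qed
  then show ?thesis using t by (intro LIMSEQ_le_const2[OF t]) auto
qed

definition ev :: "'a::real_normed_vector \<Rightarrow> ('a \<Rightarrow>\<^sub>L real) \<Rightarrow>\<^sub>L real" where
  "ev x = Blinfun (\<lambda>f. blinfun_apply f x)"

lemma ev_apply[simp]: "blinfun_apply (ev x) f = blinfun_apply f x"
  unfolding ev_def by (subst bounded_linear_Blinfun_apply) (auto intro: blinfun.bounded_linear_left)

lemma weak_ev:
  fixes gs :: "nat \<Rightarrow> ('a::real_normed_vector \<Rightarrow>\<^sub>L real)"
  shows "weakly_convergent_to gs g \<Longrightarrow> (\<lambda>n. blinfun_apply (gs n) x) \<longlonglongrightarrow> blinfun_apply g x"
  unfolding weakly_convergent_to_def by (drule spec[of _ "ev x"]) simp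

lemma reflexive_dual:
  assumes "reflexive_space TYPE('a::banach)"
  shows "reflexive_space TYPE('a \<Rightarrow>\<^sub>L real)"
  unfolding reflexive_space_def
proof
  fix \<Psi> :: "(('a \<Rightarrow>\<^sub>L real) \<Rightarrow>\<^sub>L real) \<Rightarrow>\<^sub>L real"
  define g where "g z = blinfun_apply \<Psi> (ev z)" for z :: 'a
  have bl: "bounded_linear g"
  proof (rule bounded_linear_intro[where K = "norm \<Psi>"])
    show "g (x + y) = g x + g y" for x y
    proof -
      have "ev (x + y) = ev x + ev y" by (rule blinfun_eqI) (simp add: blinfun.add_right plus_blinfun.rep_eq)
      then show ?thesis unfolding g_def by (simp add: blinfun.add_right)
    qed
    show "g (r *\<^sub>R x) = r *\<^sub>R g x" for r x
    proof -
      have "ev (r *\<^sub>R x) = r *\<^sub>R ev x" by (rule blinfun_eqI) (simp add: blinfun.scaleR_right scaleR_blinfun.rep_eq)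
      then show ?thesis unfolding g_def by (simp add: blinfun.scaleR_right)
    qed
    show "norm (g x) \<le> norm x * norm \<Psi>" for x
    proof -
      have "norm (ev x) \<le> norm x"
      proof (rule norm_blinfun_bound)
        fix f :: "'a \<Rightarrow>\<^sub>L real"
        show "norm (blinfun_apply (ev x) f) \<le> norm x * norm f"
          using norm_blinfun[of f x] by (simp add: mult.commute)
      qed simp
      then have "norm (g x) \<le> norm \<Psi> * norm x" unfolding g_def
        using norm_blinfun[of \<Psi> "ev x"] by (meson mult_left_mono norm_ge_zero order_trans)
      then show ?thesis by (simp add: mult.commute)
    qed
  qed
  show "\<exists>x. \<forall>f. blinfun_apply \<Psi> f = blinfun_apply f x"
  proof (intro exI allI)
    fix \<Phi> :: "('a \<Rightarrow>\<^sub>L real) \<Rightarrow>\<^sub>L real"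
    obtain z where z: "\<forall>f. blinfun_apply \<Phi> f = blinfun_apply f z"
      using assms unfolding reflexive_space_def by blast
    have "\<Phi> = ev z" by (rule blinfun_eqI) (simp add: z)
    then show "blinfun_apply \<Psi> \<Phi> = blinfun_apply \<Phi> (Blinfun g)"
      using bounded_linear_Blinfun_apply[OF bl] by (simp add: g_def)
  qed
qed



lemma closure_add_closed:
  fixes A :: "'a::real_normed_vector set"
  assumes A: "\<And>x y. x \<in> A \<Longrightarrow> y \<in> A \<Longrightarrow> x + y \<in> A"
    and x: "x \<in> closure A" and y: "y \<in> closure A"
  shows "x + y \<in> closure A"
proof -
  obtain a where a: "\<forall>n. a n \<in> A" "a \<longlonglongrightarrow> x" using x closure_sequential by metis
  obtain b where b: "\<forall>n. b n \<in> A" "b \<longlonglongrightarrow> y" using y closure_sequential by metis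
  have "\<forall>n. a n + b n \<in> A" using a b A by blast
  moreover have "(\<lambda>n. a n + b n) \<longlonglongrightarrow> x + y" using a b by (intro tendsto_add) auto
  ultimately show ?thesis unfolding closure_sequential by (intro exI[of _ "\<lambda>n. a n + b n"]) simp
qed

lemma closure_scale_closed:
  fixes A :: "'a::real_normed_vector set"
  assumes A: "\<And>x q. x \<in> A \<Longrightarrow> q \<in> \<rat> \<Longrightarrow> q *\<^sub>R x \<in> A"
    and x: "x \<in> closure A"
  shows "r *\<^sub>R x \<in> closure A"
proof -
  obtain a where a: "\<forall>n. a n \<in> A" "a \<longlonglongrightarrow> x" using x closure_sequential by metis
  have "r \<in> closure \<rat>" using Rats_closure_real by simp
  then obtain q where q: "\<forall>n. q n \<in> \<rat>" "q \<longlonglongrightarrow> r" using closure_sequential by metis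
  have "\<forall>n. q n *\<^sub>R a n \<in> A" using a q A by blast
  moreover have "(\<lambda>n. q n *\<^sub>R a n) \<longlonglongrightarrow> r *\<^sub>R x" using a q by (intro tendsto_scaleR) auto
  ultimately show ?thesis unfolding closure_sequential by (intro exI[of _ "\<lambda>n. q n *\<^sub>R a n"]) simp
qed

lemma closure_subspace:
  fixes A :: "'a::real_normed_vector set"
  assumes "subspace A"
  shows "subspace (closure A)"
  unfolding subspace_def
proof (intro conjI ballI allI)
  show "0 \<in> closure A" using assms closure_subset subspace_0 by blast
  show "x + y \<in> closure A" if "x \<in> closure A" "y \<in> closure A" for x y
    using closure_add_closed[OF _ that] assms subspace_add by blast
  show "c *\<^sub>R x \<in> closure A" if "x \<in> closure A" for c x
    using closure_scale_closed[OF _ that] assms subspace_scale by blast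
qed

definition qspan :: "'a::real_normed_vector set \<Rightarrow> 'a set" where
  "qspan S = (\<lambda>l. sum_list (map (\<lambda>(q,s). of_rat q *\<^sub>R s) l)) ` lists (UNIV \<times> S)"

lemma qspan_countable: "countable S \<Longrightarrow> countable (qspan S)"
  unfolding qspan_def by (intro countable_image countable_lists) auto

lemma qspan_0: "0 \<in> qspan S"
  unfolding qspan_def by (rule image_eqI[of _ _ "[]"]) auto

lemma qspan_base: "s \<in> S \<Longrightarrow> s \<in> qspan S"
  unfolding qspan_def by (rule image_eqI[of _ _ "[(1,s)]"]) auto

lemma qspan_add: "x \<in> qspan S \<Longrightarrow> y \<in> qspan S \<Longrightarrow> x + y \<in> qspan S"
  unfolding qspan_def
proof (elim imageE)
  fix l1 l2 assume "x = sum_list (map (\<lambda>(q,s). of_rat q *\<^sub>R s) l1)" "l1 \<in> lists (UNIV \<times> S)"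
    "y = sum_list (map (\<lambda>(q,s). of_rat q *\<^sub>R s) l2)" "l2 \<in> lists (UNIV \<times> S)"
  then show "x + y \<in> (\<lambda>l. sum_list (map (\<lambda>(q,s). of_rat q *\<^sub>R s) l)) ` lists (UNIV \<times> S)"
    by (intro image_eqI[of _ _ "l1 @ l2"]) auto
qed

lemma qspan_scale: "x \<in> qspan S \<Longrightarrow> r \<in> \<rat> \<Longrightarrow> r *\<^sub>R x \<in> qspan S"
proof -
  assume x: "x \<in> qspan S" and r: "r \<in> \<rat>"
  then obtain q0 where q0: "r = of_rat q0" by (auto elim: Rats_cases)
  from x obtain l where l: "x = sum_list (map (\<lambda>(q,s). of_rat q *\<^sub>R s) l)" "l \<in> lists (UNIV \<times> S)"
    unfolding qspan_def by blast
  have "r *\<^sub>R x = sum_list (map (\<lambda>(q,s). of_rat q *\<^sub>R s) (map (\<lambda>(q,s). (q0 * q, s)) l))"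
    unfolding l(1) q0 by (induction l) (auto simp: scaleR_add_right of_rat_mult)
  moreover have "map (\<lambda>(q,s). (q0 * q, s)) l \<in> lists (UNIV \<times> S)" using l(2) by auto
  ultimately show ?thesis unfolding qspan_def by blast
qed

lemma subspace_closure_qspan: "subspace (closure (qspan S))"
  unfolding subspace_def
proof (intro conjI ballI allI)
  show "0 \<in> closure (qspan S)" using qspan_0 closure_subset by blast
  show "x + y \<in> closure (qspan S)" if "x \<in> closure (qspan S)" "y \<in> closure (qspan S)" for x y
    using closure_add_closed[OF _ that] qspan_add by blast
  show "c *\<^sub>R x \<in> closure (qspan S)" if "x \<in> closure (qspan S)" for c x
  proof -
    have "\<And>y q. y \<in> closure (qspan S) \<Longrightarrow> q \<in> \<rat> \<Longrightarrow> q *\<^sub>R y \<in> closure (qspan S)"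
    proof -
      fix y q assume y: "y \<in> closure (qspan S)" and q: "q \<in> (\<rat>::real set)"
      obtain a where a: "\<forall>n. a n \<in> qspan S" "a \<longlonglongrightarrow> y" using y closure_sequential by metis
      have "\<forall>n. q *\<^sub>R a n \<in> qspan S" using a q qspan_scale by blast
      moreover have "(\<lambda>n. q *\<^sub>R a n) \<longlonglongrightarrow> q *\<^sub>R y" using a by (intro tendsto_scaleR) auto
      ultimately show "q *\<^sub>R y \<in> closure (qspan S)" unfolding closure_sequential
        by (intro exI[of _ "\<lambda>n. q *\<^sub>R a n"]) simp
    qed
    then show ?thesis using closure_scale_closed[of "closure (qspan S)" x c] that by simp
  qed
qed

lemma span_tendsto:
  fixes c :: "nat \<Rightarrow> ('a::real_normed_vector \<Rightarrow>\<^sub>L real)"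
  assumes "\<forall>i. (\<lambda>n. blinfun_apply (c i) (vs n)) \<longlonglongrightarrow> blinfun_apply (c i) v"
    and "h \<in> span (range c)"
  shows "(\<lambda>n. blinfun_apply h (vs n)) \<longlonglongrightarrow> blinfun_apply h v"
proof -
  define T :: "('a \<Rightarrow>\<^sub>L real) set" where "T = {h. (\<lambda>n. blinfun_apply h (vs n)) \<longlonglongrightarrow> blinfun_apply h v}"
  have z: "0 \<in> T" unfolding T_def by simp
  have a: "x + y \<in> T" if "x \<in> T" "y \<in> T" for x y :: "'a \<Rightarrow>\<^sub>L real"
    using that unfolding T_def by (simp add: plus_blinfun.rep_eq tendsto_add)
  have s: "r *\<^sub>R x \<in> T" if "x \<in> T" for r and x :: "'a \<Rightarrow>\<^sub>L real"
  proof -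
    have "(\<lambda>n. r * blinfun_apply x (vs n)) \<longlonglongrightarrow> r * blinfun_apply x v"
      using that unfolding T_def by (auto intro: tendsto_mult_left)
    then show ?thesis unfolding T_def by (simp add: scaleR_blinfun.rep_eq)
  qed
  have "subspace T" unfolding subspace_def using z a s by blast
  then have "span (range c) \<subseteq> T" using assms(1) by (intro span_minimal) (auto simp: T_def)
  then show ?thesis using assms(2) unfolding T_def by blast
qed

lemma span_convergent:
  fixes c :: "nat \<Rightarrow> ('a::real_normed_vector \<Rightarrow>\<^sub>L real)"
  assumes "\<forall>i. convergent (\<lambda>n. blinfun_apply (c i) (vs n))"
    and "h \<in> span (range c)"
  shows "convergent (\<lambda>n. blinfun_apply h (vs n))"
proof -
  define T :: "('a \<Rightarrow>\<^sub>L real) set" where "T = {h. convergent (\<lambda>n. blinfun_apply h (vs n))}"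
  have z: "0 \<in> T" unfolding T_def by (simp add: convergent_const)
  have a: "x + y \<in> T" if "x \<in> T" "y \<in> T" for x y :: "'a \<Rightarrow>\<^sub>L real"
    using that unfolding T_def by (simp add: plus_blinfun.rep_eq convergent_add)
  have s: "r *\<^sub>R x \<in> T" if "x \<in> T" for r and x :: "'a \<Rightarrow>\<^sub>L real"
  proof -
    have "convergent (\<lambda>n. r * blinfun_apply x (vs n))"
      using that unfolding T_def by (auto intro: convergent_mult convergent_const)
    then show ?thesis unfolding T_def by (simp add: scaleR_blinfun.rep_eq)
  qed
  have "subspace T" unfolding subspace_def using z a s by blast
  then have "span (range c) \<subseteq> T" using assms(1) by (intro span_minimal) (auto simp: T_def)
  then show ?thesis using assms(2) unfolding T_def by blast
qed

lemma det:
  fixes S :: "'a::banach set"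
  assumes refl: "reflexive_space TYPE('a)" and cS: "countable S"
  shows "\<exists>(c::nat \<Rightarrow> ('a \<Rightarrow>\<^sub>L real)) Y. S \<subseteq> Y \<and> subspace Y \<and>
    (\<forall>vs v B. (\<forall>n. vs n \<in> Y) \<longrightarrow> v \<in> Y \<longrightarrow> (\<forall>n. norm (vs n) \<le> B) \<longrightarrow>
        (\<forall>i. (\<lambda>n. blinfun_apply (c i) (vs n)) \<longlonglongrightarrow> blinfun_apply (c i) v) \<longrightarrow> weakly_convergent_to vs v) \<and>
    (\<forall>vs B. (\<forall>n. vs n \<in> Y) \<longrightarrow> (\<forall>n. norm (vs n) \<le> B) \<longrightarrow>
        (\<forall>i. convergent (\<lambda>n. blinfun_apply (c i) (vs n))) \<longrightarrow> (\<exists>v. weakly_convergent_to vs v))"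
proof -
  define D where "D = qspan S"
  define Y where "Y = closure D"
  have Dne: "D \<noteq> {}" using qspan_0 D_def by blast
  have cD: "countable D" using qspan_countable[OF cS] D_def by simp
  define d where "d = from_nat_into D"
  have rd: "range d = D" using range_from_nat_into[OF Dne cD] d_def by simp
  define c where "c i = (SOME F::'a \<Rightarrow>\<^sub>L real. norm F \<le> 1 \<and> blinfun_apply F (d i) = norm (d i))" for i
  have c: "norm (c i) \<le> 1 \<and> blinfun_apply (c i) (d i) = norm (d i)" for i
    unfolding c_def using someI_ex[OF norming[of "d i"]] .
  have SY: "S \<subseteq> Y" unfolding Y_def D_def using qspan_base closure_subset by blast
  have Ysub: "subspace Y" unfolding Y_def D_def by (rule subspace_closure_qspan)
  have Ycl: "closed Y" unfolding Y_def by simp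
  define Yp where "Yp = {q::'a \<Rightarrow>\<^sub>L real. \<forall>y\<in>Y. blinfun_apply q y = 0}"
  have Ypsub: "subspace Yp"
    unfolding subspace_def Yp_def by (auto simp: plus_blinfun.rep_eq scaleR_blinfun.rep_eq)
  define M where "M = {h + q | h q. h \<in> span (range c) \<and> q \<in> Yp}"
  have Msub: "subspace M" unfolding M_def by (rule subspace_sums) (auto simp: Ypsub)
  have key: "\<exists>h\<in>span (range c). \<exists>q\<in>Yp. norm (f - h - q) < \<delta>" if \<delta>: "\<delta> > 0" for f \<delta>
  proof (rule ccontr)
    assume nex: "\<not> ?thesis"
    have fM: "f \<notin> closure M"
    proof
      assume "f \<in> closure M"
      then obtain m where m: "m \<in> M" "dist m f < \<delta>" using closure_approachable \<delta> by blast
      then obtain h q where "h \<in> span (range c)" "q \<in> Yp" "m = h + q" unfolding M_def by blast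
      moreover have "norm (f - m) < \<delta>" using m(2) by (simp add: dist_commute dist_norm)
      ultimately have "norm (f - h - q) < \<delta>" by (simp add: diff_diff_eq)
      then show False using nex \<open>h \<in> span (range c)\<close> \<open>q \<in> Yp\<close> by blast
    qed
    obtain \<Phi> :: "('a \<Rightarrow>\<^sub>L real) \<Rightarrow>\<^sub>L real" where \<Phi>0: "\<forall>g\<in>closure M. blinfun_apply \<Phi> g = 0"
      and \<Phi>f: "blinfun_apply \<Phi> f \<noteq> 0"
      using separation[OF closure_subspace[OF Msub] closed_closure fM] by blast
    obtain z where z: "\<forall>g. blinfun_apply \<Phi> g = blinfun_apply g z" using refl unfolding reflexive_space_def by blast
    have inM: "g \<in> closure M" if "g \<in> M" for g using that closure_subset by blast
    have zY: "z \<in> Y"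
    proof (rule ccontr)
      assume "z \<notin> Y"
      then obtain q :: "'a \<Rightarrow>\<^sub>L real" where q: "\<forall>y\<in>Y. blinfun_apply q y = 0" "blinfun_apply q z \<noteq> 0"
        using separation[OF Ysub Ycl] by blast
      have "q \<in> M" unfolding M_def
        by (rule CollectI, rule exI[of _ 0], rule exI[of _ q]) (auto simp: Yp_def q(1) span_zero)
      then have "blinfun_apply \<Phi> q = 0" using \<Phi>0 inM by blast
      then show False using z q(2) by simp
    qed
    have cz: "blinfun_apply (c i) z = 0" for i
    proof -
      have "c i \<in> M" unfolding M_def
        by (rule CollectI, rule exI[of _ "c i"], rule exI[of _ 0]) (auto simp: Yp_def intro: span_base)
      then have "blinfun_apply \<Phi> (c i) = 0" using \<Phi>0 inM by blast
      then show ?thesis using z by simp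
    qed
    have "z = 0"
    proof (rule ccontr)
      assume "z \<noteq> 0"
      define \<epsilon> where "\<epsilon> = norm z / 3"
      have "norm z > 0" using \<open>z \<noteq> 0\<close> by simp
      then have \<epsilon>: "\<epsilon> > 0" unfolding \<epsilon>_def by linarith
      obtain e where e: "e \<in> D" "dist e z < \<epsilon>" using zY \<epsilon> closure_approachable unfolding Y_def by blast
      obtain i where i: "e = d i" using e(1) rd by blast
      have "norm e = blinfun_apply (c i) (e - z)" using c[of i] cz[of i] i by (simp add: blinfun.diff_right)
      also have "\<dots> \<le> norm (c i) * norm (e - z)" using norm_blinfun[of "c i" "e - z"] by simp
      also have "\<dots> \<le> 1 * norm (e - z)" using c[of i] by (intro mult_right_mono) auto
      finally have "norm e \<le> norm (e - z)" by simp
      moreover have "norm (e - z) < \<epsilon>" using e(2) by (simp add: dist_norm)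
      moreover have "norm z \<le> norm e + norm (z - e)" by (rule norm_triangle_sub)
      moreover have "norm (z - e) = norm (e - z)" by (rule norm_minus_commute)
      ultimately show False using \<epsilon>_def \<epsilon> by linarith
    qed
    then show False using \<Phi>f z by simp
  qed
  have claimA: "weakly_convergent_to vs v"
    if vsY: "\<forall>n. vs n \<in> Y" and vY: "v \<in> Y" and bnd: "\<forall>n. norm (vs n) \<le> B"
      and conv: "\<forall>i. (\<lambda>n. blinfun_apply (c i) (vs n)) \<longlonglongrightarrow> blinfun_apply (c i) v" for vs v B
    unfolding weakly_convergent_to_def
  proof
    fix f :: "'a \<Rightarrow>\<^sub>L real"
    define B' where "B' = max B (norm v)"
    have B'0: "B' \<ge> 0" unfolding B'_def by (simp add: le_max_iff_disj)
    have vsB: "norm (vs n - v) \<le> 2 * B'" for n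
    proof -
      have "norm (vs n - v) \<le> norm (vs n) + norm v" by (rule norm_triangle_ineq4)
      also have "\<dots> \<le> B' + B'" using bnd unfolding B'_def by (intro add_mono) (auto simp: le_max_iff_disj)
      finally show ?thesis by simp
    qed
    show "(\<lambda>n. blinfun_apply f (vs n)) \<longlonglongrightarrow> blinfun_apply f v"
      unfolding lim_sequentially
    proof (intro allI impI)
      fix r :: real assume r: "r > 0"
      define \<delta> where "\<delta> = r / (4 * (B' + 1))"
      have \<delta>: "\<delta> > 0" unfolding \<delta>_def using r B'0 by simp
      obtain h q where h: "h \<in> span (range c)" and q: "q \<in> Yp" and fhq: "norm (f - h - q) < \<delta>"
        using key[OF \<delta>] by blast
      have ht: "(\<lambda>n. blinfun_apply h (vs n)) \<longlonglongrightarrow> blinfun_apply h v" by (rule span_tendsto[OF conv h])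
      have r2: "r / 2 > 0" using r by simp
      obtain no where no: "\<forall>n\<ge>no. dist (blinfun_apply h (vs n)) (blinfun_apply h v) < r/2"
        using ht[unfolded lim_sequentially, rule_format, OF r2] by blast
      have d2: "\<delta> * (2 * B') \<le> r / 2" unfolding \<delta>_def using r B'0 by (simp add: field_simps)
      show "\<exists>no. \<forall>n\<ge>no. dist (blinfun_apply f (vs n)) (blinfun_apply f v) < r"
      proof (intro exI allI impI)
        fix n assume n: "n \<ge> no"
        have qz: "blinfun_apply q (vs n) = 0" "blinfun_apply q v = 0" using q vsY vY unfolding Yp_def by auto
        have e1: "blinfun_apply f (vs n) - blinfun_apply f v =
            blinfun_apply (f - h - q) (vs n - v) + (blinfun_apply h (vs n) - blinfun_apply h v)"
          using qz by (simp add: blinfun.diff_left blinfun.diff_right)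
        have "\<bar>blinfun_apply (f - h - q) (vs n - v)\<bar> \<le> norm (f - h - q) * norm (vs n - v)"
          using norm_blinfun[of "f - h - q" "vs n - v"] by simp
        also have "\<dots> \<le> \<delta> * (2 * B')" using fhq vsB[of n] \<delta> by (intro mult_mono) auto
        finally have e2: "\<bar>blinfun_apply (f - h - q) (vs n - v)\<bar> \<le> r / 2" using d2 by linarith
        have e3: "\<bar>blinfun_apply h (vs n) - blinfun_apply h v\<bar> < r / 2" using no n by (simp add: dist_real_def)
        show "dist (blinfun_apply f (vs n)) (blinfun_apply f v) < r"
          unfolding dist_real_def e1 using e2 e3 by linarith
      qed
    qed
  qed
  have claimB: "\<exists>v. weakly_convergent_to vs v"
    if vsY: "\<forall>n. vs n \<in> Y" and bnd: "\<forall>n. norm (vs n) \<le> B"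
      and conv: "\<forall>i. convergent (\<lambda>n. blinfun_apply (c i) (vs n))" for vs B
  proof -
    have B0: "B \<ge> 0" using bnd[rule_format, of 0] norm_ge_zero[of "vs 0"] by linarith
    have vsB: "norm (vs m - vs n) \<le> 2 * B" for m n
    proof -
      have "norm (vs m - vs n) \<le> norm (vs m) + norm (vs n)" by (rule norm_triangle_ineq4)
      also have "\<dots> \<le> B + B" using bnd by (intro add_mono) auto
      finally show ?thesis by simp
    qed
    have cv: "convergent (\<lambda>n. blinfun_apply f (vs n))" for f :: "'a \<Rightarrow>\<^sub>L real"
      unfolding Cauchy_convergent_iff[symmetric]
    proof (rule CauchyI)
      fix r :: real assume r: "r > 0"
      define \<delta> where "\<delta> = r / (4 * (B + 1))"
      have \<delta>: "\<delta> > 0" unfolding \<delta>_def using r B0 by simp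
      obtain h q where h: "h \<in> span (range c)" and q: "q \<in> Yp" and fhq: "norm (f - h - q) < \<delta>"
        using key[OF \<delta>] by blast
      have "Cauchy (\<lambda>n. blinfun_apply h (vs n))"
        using span_convergent[OF conv h] Cauchy_convergent_iff by blast
      moreover have r2: "r / 2 > 0" using r by simp
      ultimately obtain M where M: "\<forall>m\<ge>M. \<forall>n\<ge>M. norm (blinfun_apply h (vs m) - blinfun_apply h (vs n)) < r/2"
        by (rule CauchyD[elim_format]) blast
      have d2: "\<delta> * (2 * B) \<le> r / 2" unfolding \<delta>_def using r B0 by (simp add: field_simps)
      show "\<exists>M. \<forall>m\<ge>M. \<forall>n\<ge>M. norm (blinfun_apply f (vs m) - blinfun_apply f (vs n)) < r"
      proof (intro exI allI impI)
        fix m n assume mn: "m \<ge> M" "n \<ge> M"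
        have qz: "blinfun_apply q (vs n) = 0" "blinfun_apply q (vs m) = 0" using q vsY unfolding Yp_def by auto
        have e1: "blinfun_apply f (vs m) - blinfun_apply f (vs n) =
            blinfun_apply (f - h - q) (vs m - vs n) + (blinfun_apply h (vs m) - blinfun_apply h (vs n))"
          using qz by (simp add: blinfun.diff_left blinfun.diff_right)
        have "\<bar>blinfun_apply (f - h - q) (vs m - vs n)\<bar> \<le> norm (f - h - q) * norm (vs m - vs n)"
          using norm_blinfun[of "f - h - q" "vs m - vs n"] by simp
        also have "\<dots> \<le> \<delta> * (2 * B)" using fhq vsB[of m n] \<delta> by (intro mult_mono) auto
        finally have e2: "\<bar>blinfun_apply (f - h - q) (vs m - vs n)\<bar> \<le> r / 2" using d2 by linarith
        have e3: "\<bar>blinfun_apply h (vs m) - blinfun_apply h (vs n)\<bar> < r / 2" using M mn by simp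
        show "norm (blinfun_apply f (vs m) - blinfun_apply f (vs n)) < r"
          unfolding real_norm_def e1 using e2 e3 by linarith
      qed
    qed
    define L where "L f = lim (\<lambda>n. blinfun_apply f (vs n))" for f :: "'a \<Rightarrow>\<^sub>L real"
    have Lt: "(\<lambda>n. blinfun_apply f (vs n)) \<longlonglongrightarrow> L f" for f
      unfolding L_def using cv convergent_LIMSEQ_iff by blast
    have bl: "bounded_linear L"
    proof (rule bounded_linear_intro[where K = B])
      show "L (f + g) = L f + L g" for f g
      proof -
        have "(\<lambda>n. blinfun_apply (f + g) (vs n)) \<longlonglongrightarrow> L f + L g"
          using tendsto_add[OF Lt[of f] Lt[of g]] by (simp add: plus_blinfun.rep_eq)
        from LIMSEQ_unique[OF Lt[of "f + g"] this] show ?thesis by simp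
      qed
      show "L (r *\<^sub>R f) = r *\<^sub>R L f" for r f
      proof -
        have "(\<lambda>n. blinfun_apply (r *\<^sub>R f) (vs n)) \<longlonglongrightarrow> r * L f"
          using tendsto_mult_left[OF Lt[of f], of r] by (simp add: scaleR_blinfun.rep_eq)
        from LIMSEQ_unique[OF Lt[of "r *\<^sub>R f"] this] show ?thesis by simp
      qed
      show "norm (L f) \<le> norm f * B" for f
      proof (rule LIMSEQ_le_const2[OF tendsto_norm[OF Lt[of f]]])
        show "\<exists>N. \<forall>n\<ge>N. norm (blinfun_apply f (vs n)) \<le> norm f * B"
        proof (intro exI allI impI)
          fix n
          have "norm (blinfun_apply f (vs n)) \<le> norm f * norm (vs n)" by (rule norm_blinfun)
          also have "\<dots> \<le> norm f * B" using bnd by (intro mult_left_mono) auto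
          finally show "norm (blinfun_apply f (vs n)) \<le> norm f * B" .
        qed
      qed
    qed
    obtain v where v: "\<forall>f. blinfun_apply (Blinfun L) f = blinfun_apply f v"
      using refl unfolding reflexive_space_def by blast
    have "weakly_convergent_to vs v" unfolding weakly_convergent_to_def
    proof
      fix f :: "'a \<Rightarrow>\<^sub>L real" show "(\<lambda>n. blinfun_apply f (vs n)) \<longlonglongrightarrow> blinfun_apply f v"
        using Lt[of f] v bounded_linear_Blinfun_apply[OF bl] by simp
    qed
    then show ?thesis by blast
  qed
  show ?thesis
  proof (rule exI[of _ c], rule exI[of _ Y], intro conjI allI impI)
    show "S \<subseteq> Y" by (rule SY)
    show "subspace Y" by (rule Ysub)
    show "weakly_convergent_to vs v"
      if "\<forall>n. vs n \<in> Y" "v \<in> Y" "\<forall>n. norm (vs n) \<le> B"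
        "\<forall>i. (\<lambda>n. blinfun_apply (c i) (vs n)) \<longlonglongrightarrow> blinfun_apply (c i) v" for vs v B
      by (rule claimA[OF that])
    show "\<exists>v. weakly_convergent_to vs v"
      if "\<forall>n. vs n \<in> Y" "\<forall>n. norm (vs n) \<le> B"
        "\<forall>i. convergent (\<lambda>n. blinfun_apply (c i) (vs n))" for vs B
      by (rule claimB[OF that])
  qed
qed



lemma inv_suc: "(\<lambda>n. 1 / real (Suc n)) \<longlonglongrightarrow> 0"
  using LIMSEQ_inverse_real_of_nat by (simp add: inverse_eq_divide)

lemma squeeze_up:
  fixes u e :: "nat \<Rightarrow> real"
  assumes "\<And>n. a \<le> u n" "\<And>n. u n \<le> a + e n" "e \<longlonglongrightarrow> 0"
  shows "u \<longlonglongrightarrow> a"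
proof (rule tendsto_sandwich[of "\<lambda>n. a" u sequentially "\<lambda>n. a + e n"])
  show "(\<lambda>n. a + e n) \<longlonglongrightarrow> a" using tendsto_add[OF tendsto_const assms(3)] by simp
qed (use assms in auto)

lemma squeeze_down:
  fixes u e :: "nat \<Rightarrow> real"
  assumes "\<And>n. a - e n \<le> u n" "\<And>n. u n \<le> a" "e \<longlonglongrightarrow> 0"
  shows "u \<longlonglongrightarrow> a"
proof (rule tendsto_sandwich[of "\<lambda>n. a - e n" u sequentially "\<lambda>n. a"])
  show "(\<lambda>n. a - e n) \<longlonglongrightarrow> a" using tendsto_diff[OF tendsto_const assms(3)] by simp
qed (use assms in auto)

lemma inv_suc_sub: "strict_mono r \<Longrightarrow> (\<lambda>n. 1 / real (Suc (r n))) \<longlonglongrightarrow> 0"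
  using LIMSEQ_subseq_LIMSEQ[OF inv_suc] by (simp add: o_def)

lemma weak_subseq: "weakly_convergent_to vs v \<Longrightarrow> strict_mono r \<Longrightarrow> weakly_convergent_to (vs \<circ> r) v"
  unfolding weakly_convergent_to_def using LIMSEQ_subseq_LIMSEQ by (auto simp: o_def)

lemma abs_apply_le:
  fixes g :: "'a::real_normed_vector \<Rightarrow>\<^sub>L real"
  assumes "norm g \<le> 1" "norm y \<le> 1"
  shows "\<bar>blinfun_apply g y\<bar> \<le> 1"
proof -
  have "\<bar>blinfun_apply g y\<bar> \<le> norm g * norm y" using norm_blinfun[of g y] by simp
  also have "\<dots> \<le> 1 * 1" using assms by (intro mult_mono) auto
  finally show ?thesis by simp
qed

lemma wsc:
  fixes vs :: "nat \<Rightarrow> 'a::banach"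
  assumes refl: "reflexive_space TYPE('a)" and bnd: "\<And>n. norm (vs n) \<le> B"
  shows "\<exists>r v. strict_mono r \<and> weakly_convergent_to (vs \<circ> r) v"
proof -
  have "countable (range vs)" by simp
  from det[OF refl this] obtain c :: "nat \<Rightarrow> ('a \<Rightarrow>\<^sub>L real)" and Y where
    SY: "range vs \<subseteq> Y" and
    cB: "\<forall>vs B. (\<forall>n. vs n \<in> Y) \<longrightarrow> (\<forall>n. norm (vs n) \<le> B) \<longrightarrow>
        (\<forall>i. convergent (\<lambda>n. blinfun_apply (c i) (vs n))) \<longrightarrow> (\<exists>v. weakly_convergent_to vs v)"
    by blast
  interpret subseqs "\<lambda>i r. convergent (\<lambda>n. blinfun_apply (c i) (vs (r n)))"
  proof
    fix i and s :: "nat \<Rightarrow> nat" assume "strict_mono s"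
    have "bounded (range (\<lambda>n. blinfun_apply (c i) (vs (s n))))"
      unfolding bounded_iff
    proof (intro exI ballI)
      fix x assume "x \<in> range (\<lambda>n. blinfun_apply (c i) (vs (s n)))"
      then obtain n where x: "x = blinfun_apply (c i) (vs (s n))" by blast
      have "norm x \<le> norm (c i) * norm (vs (s n))" unfolding x by (rule norm_blinfun)
      also have "\<dots> \<le> norm (c i) * B" using bnd by (intro mult_left_mono) auto
      finally show "norm x \<le> norm (c i) * B" .
    qed
    from bounded_imp_convergent_subsequence[OF this] obtain l r' where
      "strict_mono r'" "((\<lambda>n. blinfun_apply (c i) (vs (s n))) \<circ> r') \<longlonglongrightarrow> l" by blast
    then show "\<exists>r'. strict_mono r' \<and> convergent (\<lambda>n. blinfun_apply (c i) (vs ((s \<circ> r') n)))"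
      by (intro exI[of _ r']) (auto simp: o_def convergent_def)
  qed
  have conv: "convergent (\<lambda>n. blinfun_apply (c i) (vs (diagseq n)))" for i
  proof -
    have "convergent (\<lambda>n. blinfun_apply (c i) (vs ((diagseq \<circ> (+) (Suc i)) n)))"
    proof (rule diagseq_holds)
      fix r s n assume "strict_mono (r::nat\<Rightarrow>nat)" "convergent (\<lambda>m. blinfun_apply (c n) (vs (s m)))"
      from convergent_subseq_convergent[OF this(2) this(1)]
      show "convergent (\<lambda>m. blinfun_apply (c n) (vs ((s \<circ> r) m)))" by (simp add: o_def)
    qed
    then have "convergent (\<lambda>n. blinfun_apply (c i) (vs (diagseq (n + Suc i))))"
      by (simp add: o_def add.commute)
    then show ?thesis using convergent_ignore_initial_segment[of "\<lambda>n. blinfun_apply (c i) (vs (diagseq n))" "Suc i"]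
      by simp
  qed
  have "\<exists>v. weakly_convergent_to (vs \<circ> diagseq) v"
    using cB[rule_format, of "vs \<circ> diagseq" B] SY bnd conv by (auto simp: o_def)
  then show ?thesis using subseq_diagseq by blast
qed

definition stage_prop :: "'a::banach \<Rightarrow> ('a \<Rightarrow>\<^sub>L real) \<Rightarrow> (nat \<Rightarrow> 'a) \<times> (nat \<Rightarrow> ('a \<Rightarrow>\<^sub>L real)) \<times> 'a \<times> ('a \<Rightarrow>\<^sub>L real) \<Rightarrow> bool" where
  "stage_prop x0 \<phi> T = (case T of (y, g, yl, gl) \<Rightarrow>
     (\<forall>n. norm (y n) \<le> 1) \<and> (\<forall>n. norm (g n) = 1) \<and> weakly_convergent_to y yl \<and>
     weakly_convergent_to g gl \<and> (\<lambda>n. blinfun_apply (g n) (y n)) \<longlonglongrightarrow> -1 \<and>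
     blinfun_apply \<phi> yl = 1 \<and> norm yl = 1 \<and> gl \<in> norming_functionals x0)"

lemma stage:
  fixes x0 :: "'a::banach"
  assumes refl: "reflexive_space TYPE('a)" and D: "is_D_point x0"
    and \<phi>: "\<phi> \<in> norming_functionals x0"
  shows "\<exists>T. stage_prop x0 \<phi> T"
proof -
  have x0: "norm x0 = 1" using D unfolding is_D_point_def unit_sphere_def by simp
  have \<phi>n: "norm \<phi> = 1" "blinfun_apply \<phi> x0 = 1" using \<phi> unfolding norming_functionals_def by auto
  have Dsup: "(SUP y\<in>slice \<phi> \<epsilon>. norm (x0 - y)) = 2" if "\<epsilon> > 0" for \<epsilon>
    using D \<phi> that unfolding is_D_point_def by blast
  define e where "e n = 1 / real (Suc n)" for n
  have e0: "e n > 0" for n unfolding e_def by simp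
  have e1: "e n \<le> 1" for n unfolding e_def by simp
  have ex: "\<exists>y. norm y \<le> 1 \<and> blinfun_apply \<phi> y > 1 - e n \<and> norm (x0 - y) > 2 - e n" for n
  proof -
    have x0s: "x0 \<in> slice \<phi> (e n)" unfolding slice_def unit_ball_def using x0 \<phi>n e0[of n] by simp
    have bdd: "bdd_above ((\<lambda>y. norm (x0 - y)) ` slice \<phi> (e n))"
    proof (rule bdd_aboveI[where M = 2])
      fix t assume "t \<in> (\<lambda>y. norm (x0 - y)) ` slice \<phi> (e n)"
      then obtain y where y: "y \<in> slice \<phi> (e n)" "t = norm (x0 - y)" by blast
      have "norm y \<le> 1" using y(1) unfolding slice_def unit_ball_def by simp
      then show "t \<le> 2" using y(2) norm_triangle_ineq4[of x0 y] x0 by linarith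
    qed
    have "2 - e n < (SUP y\<in>slice \<phi> (e n). norm (x0 - y))" using Dsup[OF e0[of n]] e0[of n] by simp
    then obtain y where "y \<in> slice \<phi> (e n)" "2 - e n < norm (x0 - y)"
      using less_cSUP_iff[of "slice \<phi> (e n)" "\<lambda>y. norm (x0 - y)"] x0s bdd by blast
    then show ?thesis unfolding slice_def unit_ball_def by auto
  qed
  then have "\<forall>n. \<exists>y. norm y \<le> 1 \<and> blinfun_apply \<phi> y > 1 - e n \<and> norm (x0 - y) > 2 - e n" by blast
  then obtain y where yall: "\<forall>n. norm (y n) \<le> 1 \<and> blinfun_apply \<phi> (y n) > 1 - e n \<and> norm (x0 - y n) > 2 - e n"
    by (rule choice[THEN exE])
  have y: "\<And>n. norm (y n) \<le> 1" "\<And>n. blinfun_apply \<phi> (y n) > 1 - e n"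
    "\<And>n. norm (x0 - y n) > 2 - e n" using yall by auto
  define g where "g n = (SOME F::'a \<Rightarrow>\<^sub>L real. norm F \<le> 1 \<and> blinfun_apply F (x0 - y n) = norm (x0 - y n))" for n
  have g: "norm (g n) \<le> 1 \<and> blinfun_apply (g n) (x0 - y n) = norm (x0 - y n)" for n
    unfolding g_def using someI_ex[OF norming[of "x0 - y n"]] .
  have gx0: "\<bar>blinfun_apply (g n) x0\<bar> \<le> 1" for n using abs_apply_le[of "g n" x0] g[of n] x0 by simp
  have gy: "\<bar>blinfun_apply (g n) (y n)\<bar> \<le> 1" for n using abs_apply_le[of "g n" "y n"] g[of n] y(1)[of n] by simp
  have gdiff: "blinfun_apply (g n) x0 - blinfun_apply (g n) (y n) > 2 - e n" for n
    using g[of n] y(3)[of n] by (simp add: blinfun.diff_right)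
  have gyl: "blinfun_apply (g n) (y n) < -1 + e n" for n using gdiff[of n] gx0[of n] by linarith
  have gxl: "blinfun_apply (g n) x0 > 1 - e n" for n using gdiff[of n] gy[of n] by linarith
  have gn: "norm (g n) = 1" for n
  proof -
    have "norm (x0 - y n) > 0" using y(3)[of n] e1[of n] by linarith
    moreover have "norm (x0 - y n) \<le> norm (g n) * norm (x0 - y n)"
      using norm_blinfun[of "g n" "x0 - y n"] g[of n] by simp
    ultimately have "1 \<le> norm (g n)" by simp
    then show ?thesis using g[of n] by simp
  qed
  obtain r1 yl where r1: "strict_mono r1" and yl: "weakly_convergent_to (y \<circ> r1) yl"
    using wsc[OF refl, of y 1] y(1) by blast
  have gb: "norm ((g \<circ> r1) n) \<le> 1" for n using gn by simp
  obtain r2 gl where r2: "strict_mono r2" and gl: "weakly_convergent_to ((g \<circ> r1) \<circ> r2) gl"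
    using wsc[OF reflexive_dual[OF refl], of "g \<circ> r1" 1] gb by blast
  define r where "r = r1 \<circ> r2"
  have r: "strict_mono r" unfolding r_def using r1 r2 strict_mono_o by blast
  have er: "(\<lambda>n. e (r n)) \<longlonglongrightarrow> 0" unfolding e_def using inv_suc_sub[OF r] .
  have ylr: "weakly_convergent_to (y \<circ> r) yl" unfolding r_def using weak_subseq[OF yl r2] by (simp add: o_assoc)
  have glr: "weakly_convergent_to (g \<circ> r) gl" unfolding r_def using gl by (simp add: o_assoc)
  have "stage_prop x0 \<phi> (y \<circ> r, g \<circ> r, yl, gl)"
    unfolding stage_prop_def
  proof (simp only: prod.case, intro conjI allI)
    show "norm ((y \<circ> r) n) \<le> 1" for n using y(1) by simp
    show "norm ((g \<circ> r) n) = 1" for n using gn by simp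
    show "weakly_convergent_to (y \<circ> r) yl" by (rule ylr)
    show "weakly_convergent_to (g \<circ> r) gl" by (rule glr)
    show "(\<lambda>n. blinfun_apply ((g \<circ> r) n) ((y \<circ> r) n)) \<longlonglongrightarrow> -1"
      by (rule squeeze_up[OF _ _ er]) (use gy gyl in \<open>auto simp: abs_le_iff less_imp_le\<close>)
    have \<phi>t: "(\<lambda>n. blinfun_apply \<phi> ((y \<circ> r) n)) \<longlonglongrightarrow> blinfun_apply \<phi> yl"
      using ylr unfolding weakly_convergent_to_def by blast
    have \<phi>b: "blinfun_apply \<phi> ((y \<circ> r) n) \<le> 1" for n using abs_apply_le[of \<phi> "y (r n)"] \<phi>n y(1) by simp
    have "(\<lambda>n. blinfun_apply \<phi> ((y \<circ> r) n)) \<longlonglongrightarrow> 1"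
      by (rule squeeze_down[OF _ _ er]) (use y(2) \<phi>b in \<open>auto simp: less_imp_le\<close>)
    then show \<phi>yl: "blinfun_apply \<phi> yl = 1" using \<phi>t LIMSEQ_unique by blast
    have ylb: "norm yl \<le> 1" using weak_norm_le[OF ylr, of 1] y(1) by simp
    moreover have "1 \<le> norm yl" using abs_apply_le[of \<phi> yl] \<phi>n ylb \<phi>yl norm_blinfun[of \<phi> yl] by simp
    ultimately show "norm yl = 1" by simp
    have gt: "(\<lambda>n. blinfun_apply ((g \<circ> r) n) x0) \<longlonglongrightarrow> blinfun_apply gl x0" by (rule weak_ev[OF glr])
    have "(\<lambda>n. blinfun_apply ((g \<circ> r) n) x0) \<longlonglongrightarrow> 1"
      by (rule squeeze_down[OF _ _ er]) (use gx0 gxl in \<open>auto simp: abs_le_iff less_imp_le\<close>)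
    then have glx: "blinfun_apply gl x0 = 1" using gt LIMSEQ_unique by blast
    have glb: "norm gl \<le> 1" using weak_norm_le[OF glr, of 1] gn by simp
    moreover have "1 \<le> norm gl" using norm_blinfun[of gl x0] glx x0 by simp
    ultimately show "gl \<in> norming_functionals x0" unfolding norming_functionals_def using glx by simp
  qed
  then show ?thesis by blast
qed



lemma not_KK:
  fixes x :: "'b::real_normed_vector"
  assumes "is_seq_super_Delta_point x"
  shows "\<not> kadets_klee TYPE('b)"
proof
  assume kk: "kadets_klee TYPE('b)"
  obtain xs where xs: "\<forall>n. xs n \<in> unit_sphere" "weakly_convergent_to xs x" "(\<lambda>n. norm (x - xs n)) \<longlonglongrightarrow> 2"
    and xu: "x \<in> unit_sphere" using assms unfolding is_seq_super_Delta_point_def by blast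
  have "(\<lambda>n. norm (x - xs n)) \<longlonglongrightarrow> 0" using kk xs(1,2) xu unfolding kadets_klee_def by blast
  with xs(3) have "(2::real) = 0" using LIMSEQ_unique by blast
  then show False by simp
qed

lemma avg_face:
  fixes a b :: "'a::real_normed_vector \<Rightarrow>\<^sub>L real"
  assumes "norm a \<le> 1" "norm b \<le> 1" "norm y \<le> 1" "blinfun_apply ((1/2) *\<^sub>R (a + b)) y = 1"
  shows "blinfun_apply a y = 1 \<and> blinfun_apply b y = 1"
proof -
  have "blinfun_apply a y + blinfun_apply b y = 2" using assms(4)
    by (simp add: scaleR_blinfun.rep_eq plus_blinfun.rep_eq)
  moreover have "\<bar>blinfun_apply a y\<bar> \<le> 1" "\<bar>blinfun_apply b y\<bar> \<le> 1" using abs_apply_le assms by blast+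
  ultimately show ?thesis by linarith
qed

lemma main_exist:
  fixes x0 :: "'a::banach"
  assumes refl: "reflexive_space TYPE('a)" and D: "is_D_point x0"
  shows "(\<exists>x::'a. is_seq_super_Delta_point x) \<and> (\<exists>f::'a \<Rightarrow>\<^sub>L real. is_seq_super_Delta_point f)"
proof -
  have x0: "norm x0 = 1" using D unfolding is_D_point_def unit_sphere_def by simp
  let ?NF = "norming_functionals x0"
  obtain f0 :: "'a \<Rightarrow>\<^sub>L real" where f0: "norm f0 \<le> 1" "blinfun_apply f0 x0 = 1"
    using norming[of x0] x0 by auto
  have "1 \<le> norm f0" using norm_blinfun[of f0 x0] f0 x0 by simp
  then have f0NF: "f0 \<in> ?NF" using f0 unfolding norming_functionals_def by simp
  define ST where "ST \<phi> = (SOME T. stage_prop x0 \<phi> T)" for \<phi>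
  have STp: "stage_prop x0 \<phi> (ST \<phi>)" if "\<phi> \<in> ?NF" for \<phi>
    unfolding ST_def using someI_ex[OF stage[OF refl D that]] .
  define GL where "GL \<phi> = snd (snd (snd (ST \<phi>)))" for \<phi>
  have GLNF: "GL \<phi> \<in> ?NF" if "\<phi> \<in> ?NF" for \<phi>
    using STp[OF that] unfolding GL_def stage_prop_def by (auto split: prod.splits)
  define \<Phi> where "\<Phi> = rec_nat f0 (\<lambda>k \<phi>. (1/2) *\<^sub>R (\<phi> + GL \<phi>))"
  have \<Phi>0: "\<Phi> 0 = f0" and \<Phi>S: "\<Phi> (Suc k) = (1/2) *\<^sub>R (\<Phi> k + GL (\<Phi> k))" for k
    unfolding \<Phi>_def by simp_all
  have \<Phi>NF: "\<Phi> k \<in> ?NF" for k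
  proof (induction k)
    case 0 then show ?case using f0NF \<Phi>0 by simp
  next
    case (Suc k)
    have a: "norm (\<Phi> k) = 1" "blinfun_apply (\<Phi> k) x0 = 1" using Suc unfolding norming_functionals_def by auto
    have b: "norm (GL (\<Phi> k)) = 1" "blinfun_apply (GL (\<Phi> k)) x0 = 1"
      using GLNF[OF Suc] unfolding norming_functionals_def by auto
    have v: "blinfun_apply (\<Phi> (Suc k)) x0 = 1" unfolding \<Phi>S using a b
      by (simp add: scaleR_blinfun.rep_eq plus_blinfun.rep_eq)
    have "norm (\<Phi> (Suc k)) \<le> (1/2) * (norm (\<Phi> k) + norm (GL (\<Phi> k)))"
      unfolding \<Phi>S using norm_triangle_ineq[of "\<Phi> k" "GL (\<Phi> k)"] by simp
    then have "norm (\<Phi> (Suc k)) \<le> 1" using a b by simp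
    moreover have "1 \<le> norm (\<Phi> (Suc k))" using norm_blinfun[of "\<Phi> (Suc k)" x0] v x0 by simp
    ultimately show ?case using v unfolding norming_functionals_def by simp
  qed
  define ys where "ys k = fst (ST (\<Phi> k))" for k
  define gs where "gs k = fst (snd (ST (\<Phi> k)))" for k
  define yl where "yl k = fst (snd (snd (ST (\<Phi> k))))" for k
  define gl where "gl k = GL (\<Phi> k)" for k
  have STeq: "ST (\<Phi> k) = (ys k, gs k, yl k, gl k)" for k
    unfolding ys_def gs_def yl_def gl_def GL_def by simp
  have SP: "stage_prop x0 (\<Phi> k) (ys k, gs k, yl k, gl k)" for k using STp[OF \<Phi>NF] STeq by metis
  have ysb: "norm (ys k n) \<le> 1" and gsn: "norm (gs k n) = 1"
    and ysw: "weakly_convergent_to (ys k) (yl k)" and gsw: "weakly_convergent_to (gs k) (gl k)"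
    and pair: "(\<lambda>n. blinfun_apply (gs k n) (ys k n)) \<longlonglongrightarrow> -1"
    and \<Phi>yl: "blinfun_apply (\<Phi> k) (yl k) = 1" and yln: "norm (yl k) = 1" and glNF: "gl k \<in> ?NF"
    for k n using SP[of k] unfolding stage_prop_def by simp_all
  have gln: "norm (gl k) = 1" and glx: "blinfun_apply (gl k) x0 = 1" for k
    using glNF[of k] unfolding norming_functionals_def by auto
  have C: "\<forall>y. norm y \<le> 1 \<longrightarrow> blinfun_apply (\<Phi> k) y = 1 \<longrightarrow> (\<forall>j<k. blinfun_apply (gl j) y = 1)" for k
  proof (induction k)
    case 0 then show ?case by simp
  next
    case (Suc k)
    show ?case
    proof (intro allI impI)
      fix y j assume y: "norm (y::'a) \<le> 1" and \<Phi>y: "blinfun_apply (\<Phi> (Suc k)) y = 1" and j: "j < Suc k"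
      have nk: "norm (\<Phi> k) \<le> 1" using \<Phi>NF[of k] unfolding norming_functionals_def by simp
      have ng: "norm (GL (\<Phi> k)) \<le> 1" using gln[of k] unfolding gl_def by simp
      have "blinfun_apply ((1/2) *\<^sub>R (\<Phi> k + GL (\<Phi> k))) y = 1" using \<Phi>y unfolding \<Phi>S .
      from avg_face[OF nk ng y this]
      have both: "blinfun_apply (\<Phi> k) y = 1 \<and> blinfun_apply (gl k) y = 1" unfolding gl_def .
      show "blinfun_apply (gl j) y = 1"
      proof (cases "j = k")
        case True then show ?thesis using both by simp
      next
        case False then have "j < k" using j by simp
        then show ?thesis using Suc.IH y both by blast
      qed
    qed
  qed
  have Fk: "blinfun_apply (gl j) (yl k) = 1" if "j < k" for j k
    using C[of k] yln[of k] \<Phi>yl[of k] that by simp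
  obtain r1 ystar where r1: "strict_mono r1" and ys1: "weakly_convergent_to (yl \<circ> r1) ystar"
    using wsc[OF refl, of yl 1] yln by auto
  have glb: "norm ((gl \<circ> r1) n) \<le> 1" for n using gln by simp
  obtain r2 gstar where r2: "strict_mono r2" and gs2: "weakly_convergent_to ((gl \<circ> r1) \<circ> r2) gstar"
    using wsc[OF reflexive_dual[OF refl], of "gl \<circ> r1" 1] glb by blast
  define r where "r = r1 \<circ> r2"
  have r: "strict_mono r" unfolding r_def using r1 r2 strict_mono_o by blast
  have ylr: "weakly_convergent_to (yl \<circ> r) ystar" unfolding r_def using weak_subseq[OF ys1 r2] by (simp add: o_assoc)
  have glr: "weakly_convergent_to (gl \<circ> r) gstar" unfolding r_def using gs2 by (simp add: o_assoc)
  have ystb: "norm ystar \<le> 1" using weak_norm_le[OF ylr, of 1] yln by simp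
  have gstb: "norm gstar \<le> 1" using weak_norm_le[OF glr, of 1] gln by simp
  have glys: "blinfun_apply (gl j) ystar = 1" for j
  proof -
    have t: "(\<lambda>k. blinfun_apply (gl j) (yl (r k))) \<longlonglongrightarrow> blinfun_apply (gl j) ystar"
      using ylr unfolding weakly_convergent_to_def by (simp add: o_def)
    have "eventually (\<lambda>k. blinfun_apply (gl j) (yl (r k)) = 1) sequentially"
      unfolding eventually_sequentially
    proof (intro exI allI impI)
      fix k assume "Suc j \<le> k"
      then have "j < r k" using seq_suble[OF r, of k] by simp
      then show "blinfun_apply (gl j) (yl (r k)) = 1" by (rule Fk)
    qed
    then have "(\<lambda>k. blinfun_apply (gl j) (yl (r k))) \<longlonglongrightarrow> 1" by (rule tendsto_eventually)
    then show ?thesis using t LIMSEQ_unique by blast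
  qed
  have gsys: "blinfun_apply gstar ystar = 1"
  proof -
    have t: "(\<lambda>k. blinfun_apply ((gl \<circ> r) k) ystar) \<longlonglongrightarrow> blinfun_apply gstar ystar" by (rule weak_ev[OF glr])
    moreover have "(\<lambda>k. blinfun_apply ((gl \<circ> r) k) ystar) = (\<lambda>k. 1)" using glys by (simp add: o_def)
    ultimately show ?thesis using LIMSEQ_unique tendsto_const by metis
  qed
  have "1 \<le> norm gstar * norm ystar" using norm_blinfun[of gstar ystar] gsys by simp
  moreover have "norm gstar * norm ystar \<le> norm gstar" using ystb by (simp add: mult_left_le)
  moreover have "norm gstar * norm ystar \<le> norm ystar" using gstb by (simp add: mult_left_le_one_le)
  ultimately have gstn: "norm gstar = 1" and ystn: "norm ystar = 1" using ystb gstb by linarith+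
  define S1 where "S1 = (\<lambda>(k,n). ys k n) ` UNIV \<union> range yl \<union> {ystar}"
  have cS1: "countable S1" unfolding S1_def by simp
  obtain c1 :: "nat \<Rightarrow> ('a \<Rightarrow>\<^sub>L real)" and Y1 where SY1: "S1 \<subseteq> Y1" and
    cA1: "\<forall>vs v B. (\<forall>n. vs n \<in> Y1) \<longrightarrow> v \<in> Y1 \<longrightarrow> (\<forall>n. norm (vs n) \<le> B) \<longrightarrow>
        (\<forall>i. (\<lambda>n. blinfun_apply (c1 i) (vs n)) \<longlonglongrightarrow> blinfun_apply (c1 i) v) \<longrightarrow> weakly_convergent_to vs v"
    using det[OF refl cS1] by blast
  define S2 where "S2 = (\<lambda>(k,n). gs k n) ` UNIV \<union> range gl \<union> {gstar}"
  have cS2: "countable S2" unfolding S2_def by simp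
  obtain c2 :: "nat \<Rightarrow> (('a \<Rightarrow>\<^sub>L real) \<Rightarrow>\<^sub>L real)" and Y2 where SY2: "S2 \<subseteq> Y2" and
    cA2: "\<forall>vs v B. (\<forall>n. vs n \<in> Y2) \<longrightarrow> v \<in> Y2 \<longrightarrow> (\<forall>n. norm (vs n) \<le> B) \<longrightarrow>
        (\<forall>i. (\<lambda>n. blinfun_apply (c2 i) (vs n)) \<longlonglongrightarrow> blinfun_apply (c2 i) v) \<longrightarrow> weakly_convergent_to vs v"
    using det[OF reflexive_dual[OF refl] cS2] by blast
  define e where "e k = 1 / real (Suc k)" for k
  have e0: "e k > 0" for k unfolding e_def by simp
  have e1: "e k \<le> 1" for k unfolding e_def by simp
  have et: "e \<longlonglongrightarrow> 0" unfolding e_def by (rule inv_suc)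
  define P where "P k n \<longleftrightarrow>
      (\<forall>i\<in>{..k}. \<bar>blinfun_apply (c1 i) (ys (r k) n) - blinfun_apply (c1 i) (yl (r k))\<bar> < e k) \<and>
      (\<forall>i\<in>{..k}. \<bar>blinfun_apply (c2 i) (gs (r k) n) - blinfun_apply (c2 i) (gl (r k))\<bar> < e k) \<and>
      blinfun_apply (gs (r k) n) (ys (r k) n) < -1 + e k" for k n
  have exn: "\<exists>n. P k n" for k
  proof -
    have ev1: "eventually (\<lambda>n. \<forall>i\<in>{..k}. \<bar>blinfun_apply (c1 i) (ys (r k) n) - blinfun_apply (c1 i) (yl (r k))\<bar> < e k) sequentially"
    proof (rule eventually_ball_finite, simp, intro ballI)
      fix i
      have "(\<lambda>n. blinfun_apply (c1 i) (ys (r k) n)) \<longlonglongrightarrow> blinfun_apply (c1 i) (yl (r k))"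
        using ysw[of "r k"] unfolding weakly_convergent_to_def by blast
      then show "eventually (\<lambda>n. \<bar>blinfun_apply (c1 i) (ys (r k) n) - blinfun_apply (c1 i) (yl (r k))\<bar> < e k) sequentially"
        using e0[of k] unfolding tendsto_iff dist_real_def by blast
    qed
    have ev2: "eventually (\<lambda>n. \<forall>i\<in>{..k}. \<bar>blinfun_apply (c2 i) (gs (r k) n) - blinfun_apply (c2 i) (gl (r k))\<bar> < e k) sequentially"
    proof (rule eventually_ball_finite, simp, intro ballI)
      fix i
      have "(\<lambda>n. blinfun_apply (c2 i) (gs (r k) n)) \<longlonglongrightarrow> blinfun_apply (c2 i) (gl (r k))"
        using gsw[of "r k"] unfolding weakly_convergent_to_def by blast
      then show "eventually (\<lambda>n. \<bar>blinfun_apply (c2 i) (gs (r k) n) - blinfun_apply (c2 i) (gl (r k))\<bar> < e k) sequentially"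
        using e0[of k] unfolding tendsto_iff dist_real_def by blast
    qed
    have ev3: "eventually (\<lambda>n. blinfun_apply (gs (r k) n) (ys (r k) n) < -1 + e k) sequentially"
      using order_tendstoD(2)[OF pair[of "r k"], of "-1 + e k"] e0[of k] by simp
    have "eventually (P k) sequentially"
      using eventually_conj[OF ev1 eventually_conj[OF ev2 ev3]] unfolding P_def by simp
    then show ?thesis unfolding eventually_sequentially by blast
  qed
  then obtain nk where nk: "\<forall>k. P k (nk k)" using choice by metis
  define z where "z k = ys (r k) (nk k)" for k
  define w where "w k = gs (r k) (nk k)" for k
  have zb: "norm (z k) \<le> 1" for k unfolding z_def by (rule ysb)
  have wn: "norm (w k) = 1" for k unfolding w_def by (rule gsn)
  have c1c: "\<bar>blinfun_apply (c1 i) (z k) - blinfun_apply (c1 i) (yl (r k))\<bar> < e k" if "i \<le> k" for i k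
    using nk that unfolding P_def z_def by auto
  have c2c: "\<bar>blinfun_apply (c2 i) (w k) - blinfun_apply (c2 i) (gl (r k))\<bar> < e k" if "i \<le> k" for i k
    using nk that unfolding P_def w_def by auto
  have wzu: "blinfun_apply (w k) (z k) < -1 + e k" for k using nk unfolding P_def z_def w_def by auto
  have wzl: "-1 \<le> blinfun_apply (w k) (z k)" for k using abs_apply_le[of "w k" "z k"] wn zb by simp
  have zY: "z k \<in> Y1" for k using SY1 unfolding S1_def z_def by auto
  have ystY: "ystar \<in> Y1" using SY1 unfolding S1_def by auto
  have wY: "w k \<in> Y2" for k using SY2 unfolding S2_def w_def by auto
  have gstY: "gstar \<in> Y2" using SY2 unfolding S2_def by auto
  have zall: "\<forall>i. (\<lambda>k. blinfun_apply (c1 i) (z k)) \<longlonglongrightarrow> blinfun_apply (c1 i) ystar"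
  proof (rule allI)
    fix i
    have t1: "(\<lambda>k. blinfun_apply (c1 i) (yl (r k))) \<longlonglongrightarrow> blinfun_apply (c1 i) ystar"
      using ylr unfolding weakly_convergent_to_def by (simp add: o_def)
    have t2: "(\<lambda>k. blinfun_apply (c1 i) (z k) - blinfun_apply (c1 i) (yl (r k))) \<longlonglongrightarrow> 0"
    proof (rule Lim_null_comparison[OF _ et])
      show "eventually (\<lambda>k. norm (blinfun_apply (c1 i) (z k) - blinfun_apply (c1 i) (yl (r k))) \<le> e k) sequentially"
        unfolding eventually_sequentially using c1c by (intro exI[of _ i]) (auto intro: less_imp_le)
    qed
    show "(\<lambda>k. blinfun_apply (c1 i) (z k)) \<longlonglongrightarrow> blinfun_apply (c1 i) ystar"
      using tendsto_add[OF t2 t1] by simp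
  qed
  have zconv: "weakly_convergent_to z ystar"
    using cA1[rule_format, of z ystar 1] zY ystY zb zall by blast
  have wall: "\<forall>i. (\<lambda>k. blinfun_apply (c2 i) (w k)) \<longlonglongrightarrow> blinfun_apply (c2 i) gstar"
  proof (rule allI)
    fix i
    have t1: "(\<lambda>k. blinfun_apply (c2 i) (gl (r k))) \<longlonglongrightarrow> blinfun_apply (c2 i) gstar"
      using glr unfolding weakly_convergent_to_def by (simp add: o_def)
    have t2: "(\<lambda>k. blinfun_apply (c2 i) (w k) - blinfun_apply (c2 i) (gl (r k))) \<longlonglongrightarrow> 0"
    proof (rule Lim_null_comparison[OF _ et])
      show "eventually (\<lambda>k. norm (blinfun_apply (c2 i) (w k) - blinfun_apply (c2 i) (gl (r k))) \<le> e k) sequentially"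
        unfolding eventually_sequentially using c2c by (intro exI[of _ i]) (auto intro: less_imp_le)
    qed
    show "(\<lambda>k. blinfun_apply (c2 i) (w k)) \<longlonglongrightarrow> blinfun_apply (c2 i) gstar"
      using tendsto_add[OF t2 t1] by simp
  qed
  have wb: "norm (w k) \<le> 1" for k using wn[of k] by simp
  have wconv: "weakly_convergent_to w gstar"
    using cA2[rule_format, of w gstar 1] wY gstY wb wall by blast
  have wzt: "(\<lambda>k. blinfun_apply (w k) (z k)) \<longlonglongrightarrow> -1"
    by (rule squeeze_up[OF _ _ et]) (use wzl wzu in \<open>auto intro: less_imp_le\<close>)
  have nzl: "1 - e k \<le> norm (z k)" for k
  proof -
    have "- blinfun_apply (w k) (z k) \<le> norm (w k) * norm (z k)" using norm_blinfun[of "w k" "z k"] by simp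
    then show ?thesis using wn[of k] wzu[of k] by simp
  qed
  have nzt: "(\<lambda>k. norm (z k)) \<longlonglongrightarrow> 1"
    by (rule squeeze_down[OF _ _ et]) (use nzl zb in auto)
  have nzp: "norm (z k) > 0" for k
  proof -
    have "blinfun_apply (w k) (z k) < 0" using wzu[of k] e1[of k] by linarith
    then have "z k \<noteq> 0" by auto
    then show ?thesis by simp
  qed
  define u where "u k = (1 / norm (z k)) *\<^sub>R z k" for k
  have un: "norm (u k) = 1" for k unfolding u_def using nzp[of k] by simp
  have uapp: "blinfun_apply f (u k) = blinfun_apply f (z k) / norm (z k)" for f :: "'a \<Rightarrow>\<^sub>L real" and k
    unfolding u_def by (simp add: blinfun.scaleR_right)
  have uconv: "weakly_convergent_to u ystar"
    unfolding weakly_convergent_to_def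
  proof
    fix f :: "'a \<Rightarrow>\<^sub>L real"
    have "(\<lambda>k. blinfun_apply f (z k) / norm (z k)) \<longlonglongrightarrow> blinfun_apply f ystar / 1"
      using zconv unfolding weakly_convergent_to_def by (intro tendsto_divide nzt) auto
    then show "(\<lambda>k. blinfun_apply f (u k)) \<longlonglongrightarrow> blinfun_apply f ystar" by (simp add: uapp)
  qed
  have dist1: "(\<lambda>k. norm (ystar - u k)) \<longlonglongrightarrow> 2"
  proof (rule tendsto_sandwich[of "\<lambda>k. blinfun_apply (w k) ystar - blinfun_apply (w k) (z k) / norm (z k)" _ _ "\<lambda>k. 2"])
    show "eventually (\<lambda>k. blinfun_apply (w k) ystar - blinfun_apply (w k) (z k) / norm (z k) \<le> norm (ystar - u k)) sequentially"
    proof (rule always_eventually, rule allI)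
      fix k
      have "blinfun_apply (w k) ystar - blinfun_apply (w k) (z k) / norm (z k) = blinfun_apply (w k) (ystar - u k)"
        by (simp add: blinfun.diff_right uapp)
      also have "\<dots> \<le> norm (w k) * norm (ystar - u k)" using norm_blinfun[of "w k" "ystar - u k"] by simp
      finally show "blinfun_apply (w k) ystar - blinfun_apply (w k) (z k) / norm (z k) \<le> norm (ystar - u k)"
        using wn[of k] by simp
    qed
    show "eventually (\<lambda>k. norm (ystar - u k) \<le> 2) sequentially"
    proof (rule always_eventually, rule allI)
      fix k show "norm (ystar - u k) \<le> 2" using norm_triangle_ineq4[of ystar "u k"] ystn un[of k] by simp
    qed
    have "(\<lambda>k. blinfun_apply (w k) ystar) \<longlonglongrightarrow> 1" using weak_ev[OF wconv, of ystar] gsys by simp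
    moreover have "(\<lambda>k. blinfun_apply (w k) (z k) / norm (z k)) \<longlonglongrightarrow> -1 / 1" by (intro tendsto_divide wzt nzt) auto
    ultimately show "(\<lambda>k. blinfun_apply (w k) ystar - blinfun_apply (w k) (z k) / norm (z k)) \<longlonglongrightarrow> 2"
      using tendsto_diff by fastforce
  qed simp
  have dist2: "(\<lambda>k. norm (gstar - w k)) \<longlonglongrightarrow> 2"
  proof (rule tendsto_sandwich[of "\<lambda>k. blinfun_apply gstar (z k) - blinfun_apply (w k) (z k)" _ _ "\<lambda>k. 2"])
    show "eventually (\<lambda>k. blinfun_apply gstar (z k) - blinfun_apply (w k) (z k) \<le> norm (gstar - w k)) sequentially"
    proof (rule always_eventually, rule allI)
      fix k
      have "blinfun_apply gstar (z k) - blinfun_apply (w k) (z k) = blinfun_apply (gstar - w k) (z k)"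
        by (simp add: blinfun.diff_left)
      also have "\<dots> \<le> norm (gstar - w k) * norm (z k)" using norm_blinfun[of "gstar - w k" "z k"] by simp
      also have "\<dots> \<le> norm (gstar - w k) * 1" using zb[of k] by (intro mult_left_mono) auto
      finally show "blinfun_apply gstar (z k) - blinfun_apply (w k) (z k) \<le> norm (gstar - w k)" by simp
    qed
    show "eventually (\<lambda>k. norm (gstar - w k) \<le> 2) sequentially"
    proof (rule always_eventually, rule allI)
      fix k show "norm (gstar - w k) \<le> 2" using norm_triangle_ineq4[of gstar "w k"] gstn wn[of k] by simp
    qed
    have "(\<lambda>k. blinfun_apply gstar (z k)) \<longlonglongrightarrow> 1" using zconv gsys unfolding weakly_convergent_to_def by metis
    then show "(\<lambda>k. blinfun_apply gstar (z k) - blinfun_apply (w k) (z k)) \<longlonglongrightarrow> 2"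
      using tendsto_diff[OF _ wzt] by fastforce
  qed simp
  have "is_seq_super_Delta_point ystar"
    unfolding is_seq_super_Delta_point_def unit_sphere_def
    using ystn un uconv dist1 by blast
  moreover have "is_seq_super_Delta_point gstar"
    unfolding is_seq_super_Delta_point_def unit_sphere_def
    using gstn wn wconv dist2 by blast
  ultimately show ?thesis by blast
qed


theorem corollary5p24:
  assumes "reflexive_space TYPE('a::banach)"
    and "\<exists>x::'a. is_D_point x"
  shows "(\<exists>x::'a. is_seq_super_Delta_point x)
       \<and> (\<exists>f::'a \<Rightarrow>\<^sub>L real. is_seq_super_Delta_point f)
       \<and> \<not> kadets_klee TYPE('a)
       \<and> \<not> kadets_klee TYPE('a \<Rightarrow>\<^sub>L real)"
proof -
  obtain x0 :: 'a where "is_D_point x0" using assms(2) by blast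
  from main_exist[OF assms(1) this]
  obtain x :: 'a and f :: "'a \<Rightarrow>\<^sub>L real" where
    "is_seq_super_Delta_point x" "is_seq_super_Delta_point f" by blast
  moreover have "\<not> kadets_klee TYPE('a)" by (rule not_KK[OF \<open>is_seq_super_Delta_point x\<close>])
  moreover have "\<not> kadets_klee TYPE('a \<Rightarrow>\<^sub>L real)" by (rule not_KK[OF \<open>is_seq_super_Delta_point f\<close>])
  ultimately show ?thesis by blast
qed

end
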